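(* The class of $(\circ,\wedge,\mathsf{A})$-algebras that are completely representable by partial functions is closed under (arbitrary) direct products.
   Context: A $(\circ,\wedge,\mathsf{A})$-algebra is a set with two binary operations $\circ,\wedge$ and one unary operation $\mathsf{A}$. An algebra of partial functions of this signature is a set of partial functions, with base $X$ the union of all their domains and ranges, closed under: composition $f\circ g=\{(x,z)\mid \exists y\,(x,y)\in f,(y,z)\in g\}$; intersection; antidomain $\mathsf{A}(f)=\{(x,x)\mid x\in X, x\notin\mathrm{dom}(f)\}$. A representation by partial functions is an isomorphism onto such an algebra. The order is $a\le b\iff a\wedge b=a$. A representation $\theta$ is complete if for every nonempty $S$ with $\bigwedge S$ existing, $\theta(\bigwedge S)=\bigcap\theta[S]$ (equivalently, for every $S$ with $\bigvee S$ existing, $\theta(\bigvee S)=\bigcup\theta[S]$). An algebra is completely representable if it has a complete representation. *)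

theory Defs
  imports Main "HOL-Library.FuncSet"
begin

text \<open>An algebra of signature (composition, meet, antidomain): a carrier set with
  two binary operations and one unary operation (no axioms).\<close>
record 'a cwa =
  carrier :: "'a set"
  comp :: "'a \<Rightarrow> 'a \<Rightarrow> 'a"
  mt :: "'a \<Rightarrow> 'a \<Rightarrow> 'a"
  ad :: "'a \<Rightarrow> 'a"

definition is_cwa :: "'a cwa \<Rightarrow> bool" where
  "is_cwa A \<longleftrightarrow>
     (\<forall>a\<in>carrier A. \<forall>b\<in>carrier A. comp A a b \<in> carrier A \<and> mt A a b \<in> carrier A)
     \<and> (\<forall>a\<in>carrier A. ad A a \<in> carrier A)"

definition cwa_le :: "'a cwa \<Rightarrow> 'a \<Rightarrow> 'a \<Rightarrow> bool" where
  "cwa_le A a b \<longleftrightarrow> mt A a b = a"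

definition is_meet :: "'a cwa \<Rightarrow> 'a set \<Rightarrow> 'a \<Rightarrow> bool" where
  "is_meet A S m \<longleftrightarrow> m \<in> carrier A \<and> (\<forall>s\<in>S. cwa_le A m s)
     \<and> (\<forall>c\<in>carrier A. (\<forall>s\<in>S. cwa_le A c s) \<longrightarrow> cwa_le A c m)"

definition partial_fun :: "('x \<times> 'x) set \<Rightarrow> bool" where
  "partial_fun f \<longleftrightarrow> (\<forall>x y z. (x, y) \<in> f \<longrightarrow> (x, z) \<in> f \<longrightarrow> y = z)"

definition base :: "('x \<times> 'x) set set \<Rightarrow> 'x set" where
  "base F = (\<Union>f\<in>F. Domain f \<union> Range f)"

definition antidom :: "'x set \<Rightarrow> ('x \<times> 'x) set \<Rightarrow> ('x \<times> 'x) set" where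
  "antidom X f = {(x, x) | x. x \<in> X \<and> x \<notin> Domain f}"

definition pf_representation :: "'a cwa \<Rightarrow> ('a \<Rightarrow> ('x \<times> 'x) set) \<Rightarrow> bool" where
  "pf_representation A \<theta> \<longleftrightarrow>
     inj_on \<theta> (carrier A)
     \<and> (\<forall>a\<in>carrier A. partial_fun (\<theta> a))
     \<and> (\<forall>a\<in>carrier A. \<forall>b\<in>carrier A. \<theta> (comp A a b) = \<theta> a O \<theta> b)
     \<and> (\<forall>a\<in>carrier A. \<forall>b\<in>carrier A. \<theta> (mt A a b) = \<theta> a \<inter> \<theta> b)
     \<and> (\<forall>a\<in>carrier A. \<theta> (ad A a) = antidom (base (\<theta> ` carrier A)) (\<theta> a))"

definition complete_representation :: "'a cwa \<Rightarrow> ('a \<Rightarrow> ('x \<times> 'x) set) \<Rightarrow> bool" where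
  "complete_representation A \<theta> \<longleftrightarrow> pf_representation A \<theta>
     \<and> (\<forall>S m. S \<subseteq> carrier A \<and> S \<noteq> {} \<and> is_meet A S m \<longrightarrow> \<theta> m = (\<Inter>s\<in>S. \<theta> s))"

text \<open>Completely representable, with representation base inside the type 'x.\<close>
definition completely_representable :: "'a cwa \<Rightarrow> 'x itself \<Rightarrow> bool" where
  "completely_representable A _ \<longleftrightarrow> (\<exists>\<theta> :: 'a \<Rightarrow> ('x \<times> 'x) set. complete_representation A \<theta>)"

definition direct_product :: "'i set \<Rightarrow> ('i \<Rightarrow> 'a cwa) \<Rightarrow> ('i \<Rightarrow> 'a) cwa" where
  "direct_product I A =
     \<lparr> carrier = (\<Pi>\<^sub>E i\<in>I. carrier (A i)),
       comp = (\<lambda>f g. \<lambda>i\<in>I. comp (A i) (f i) (g i)),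
       mt = (\<lambda>f g. \<lambda>i\<in>I. mt (A i) (f i) (g i)),
       ad = (\<lambda>f. \<lambda>i\<in>I. ad (A i) (f i)) \<rparr>"

end

theory Submission
  imports Defs
begin

definition Th :: "'i set \<Rightarrow> ('i \<Rightarrow> 'a \<Rightarrow> ('x \<times> 'x) set) \<Rightarrow> ('i \<Rightarrow> 'a) \<Rightarrow> (('i \<times> 'x) \<times> ('i \<times> 'x)) set" where
  "Th I th f = {((i,x),(i,y)) | i x y. i \<in> I \<and> (x,y) \<in> th i (f i)}"

lemma Th_mem: "(p, q) \<in> Th I th f \<longleftrightarrow> fst p = fst q \<and> fst p \<in> I \<and> (snd p, snd q) \<in> th (fst p) (f (fst p))"
  unfolding Th_def by (cases p; cases q) auto

lemma prod_is_cwa: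
  assumes "\<forall>i\<in>I. is_cwa (A i)"
  shows "is_cwa (direct_product I A)"
  using assms unfolding is_cwa_def direct_product_def by (auto simp: PiE_iff)

lemma base_Th:
  assumes f: "f \<in> (\<Pi>\<^sub>E i\<in>I. carrier (A i))"
  shows "base (Th I th ` (\<Pi>\<^sub>E i\<in>I. carrier (A i))) = {(i,x). i \<in> I \<and> x \<in> base (th i ` carrier (A i))}"
proof
  show "base (Th I th ` (\<Pi>\<^sub>E i\<in>I. carrier (A i))) \<subseteq> {(i,x). i \<in> I \<and> x \<in> base (th i ` carrier (A i))}"
    unfolding base_def Th_def by (fastforce simp: PiE_iff)
next
  show "{(i,x). i \<in> I \<and> x \<in> base (th i ` carrier (A i))} \<subseteq> base (Th I th ` (\<Pi>\<^sub>E i\<in>I. carrier (A i)))"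
  proof clarify
    fix i x assume i: "i \<in> I" and x: "x \<in> base (th i ` carrier (A i))"
    then obtain g where g: "g \<in> carrier (A i)" and "x \<in> Domain (th i g) \<union> Range (th i g)"
      unfolding base_def by auto
    define h where "h = f(i := g)"
    have h: "h \<in> (\<Pi>\<^sub>E i\<in>I. carrier (A i))" using f g i unfolding h_def by (auto simp: PiE_iff extensional_def)
    have "(i,x) \<in> Domain (Th I th h) \<union> Range (Th I th h)"
    proof -
      have hi: "h i = g" unfolding h_def by simp
      from \<open>x \<in> Domain (th i g) \<union> Range (th i g)\<close> show ?thesis
      proof
        assume "x \<in> Domain (th i g)"
        then obtain y where "(x,y) \<in> th i g" by auto
        then have "((i,x),(i,y)) \<in> Th I th h" using i hi by (simp add: Th_mem)
        then show ?thesis by blast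
      next
        assume "x \<in> Range (th i g)"
        then obtain y where "(y,x) \<in> th i g" by auto
        then have "((i,y),(i,x)) \<in> Th I th h" using i hi by (simp add: Th_mem)
        then show ?thesis by blast
      qed
    qed
    then show "(i,x) \<in> base (Th I th ` (\<Pi>\<^sub>E i\<in>I. carrier (A i)))"
      using h unfolding base_def by blast
  qed
qed

theorem mainTheorem7:
  fixes I :: "'i set" and A :: "'i \<Rightarrow> 'a cwa"
  assumes "\<forall>i\<in>I. is_cwa (A i)"
    and "\<forall>i\<in>I. completely_representable (A i) TYPE('x)"
  shows "is_cwa (direct_product I A)
         \<and> completely_representable (direct_product I A) TYPE('i \<times> 'x)"
proof
  show "is_cwa (direct_product I A)" using prod_is_cwa assms(1) .
  define th where "th i = (SOME t :: 'a \<Rightarrow> ('x \<times> 'x) set. complete_representation (A i) t)" for i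
  have th: "complete_representation (A i) (th i)" if "i \<in> I" for i
    using assms(2) that unfolding th_def completely_representable_def by (metis someI_ex)
  have cl: "is_cwa (A i)" if "i \<in> I" for i using assms(1) that by auto
  let ?P = "direct_product I A"
  have carP: "carrier ?P = (\<Pi>\<^sub>E i\<in>I. carrier (A i))" by (simp add: direct_product_def)
  have compP: "comp ?P f g = (\<lambda>i\<in>I. comp (A i) (f i) (g i))" for f g by (simp add: direct_product_def)
  have mtP: "mt ?P f g = (\<lambda>i\<in>I. mt (A i) (f i) (g i))" for f g by (simp add: direct_product_def)
  have adP: "ad ?P f = (\<lambda>i\<in>I. ad (A i) (f i))" for f by (simp add: direct_product_def)
  have rep: "pf_representation (A i) (th i)" if "i \<in> I" for i
    using th[OF that] unfolding complete_representation_def by auto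
  have pr: "pf_representation ?P (Th I th)"
    unfolding pf_representation_def
  proof (intro conjI ballI)
    show "inj_on (Th I th) (carrier ?P)"
    proof (rule inj_onI)
      fix f g assume f: "f \<in> carrier ?P" and g: "g \<in> carrier ?P" and e: "Th I th f = Th I th g"
      show "f = g"
      proof (rule extensionalityI[of _ I])
        show "f \<in> extensional I" "g \<in> extensional I" using f g carP by (auto simp: PiE_iff)
        fix i assume i: "i \<in> I"
        have "th i (f i) = th i (g i)"
        proof (intro set_eqI, clarify)
          fix x y
          have "(x,y) \<in> th i (f i) \<longleftrightarrow> ((i,x),(i,y)) \<in> Th I th f" using i by (simp add: Th_mem)
          also have "\<dots> \<longleftrightarrow> ((i,x),(i,y)) \<in> Th I th g" using e by simp
          also have "\<dots> \<longleftrightarrow> (x,y) \<in> th i (g i)" using i by (simp add: Th_mem)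
          finally show "(x,y) \<in> th i (f i) \<longleftrightarrow> (x,y) \<in> th i (g i)" .
        qed
        moreover have "f i \<in> carrier (A i)" "g i \<in> carrier (A i)" using f g i carP by auto
        ultimately show "f i = g i" using rep[OF i] unfolding pf_representation_def inj_on_def by blast
      qed
    qed
  next
    fix f assume f: "f \<in> carrier ?P"
    have fi: "f i \<in> carrier (A i)" if "i \<in> I" for i using f that carP by auto
    show "partial_fun (Th I th f)"
      unfolding partial_fun_def
    proof (intro allI impI)
      fix x y z assume a: "(x,y) \<in> Th I th f" "(x,z) \<in> Th I th f"
      then have "fst x \<in> I" unfolding Th_mem by blast
      then have "partial_fun (th (fst x) (f (fst x)))" using rep fi unfolding pf_representation_def by blast
      then show "y = z" using a unfolding Th_mem partial_fun_def by (metis prod.collapse)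
    qed
    show "Th I th (ad ?P f) = antidom (base (Th I th ` carrier ?P)) (Th I th f)"
    proof -
      have ad_i: "th i (ad (A i) (f i)) = antidom (base (th i ` carrier (A i))) (th i (f i))" if "i \<in> I" for i
        using rep[OF that] fi[OF that] unfolding pf_representation_def by blast
      have B: "base (Th I th ` carrier ?P) = {(i,x). i \<in> I \<and> x \<in> base (th i ` carrier (A i))}"
        using base_Th[of f I A th] f carP by simp
      show ?thesis
      proof (intro set_eqI)
        fix pq :: "('i \<times> 'x) \<times> ('i \<times> 'x)"
        obtain i x j y where pq: "pq = ((i,x),(j,y))" by (metis prod.collapse)
        have dom: "(i,x) \<in> Domain (Th I th f) \<longleftrightarrow> i \<in> I \<and> x \<in> Domain (th i (f i))"
        proof
          assume "(i,x) \<in> Domain (Th I th f)"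
          then obtain q where "((i,x),q) \<in> Th I th f" by auto
          then show "i \<in> I \<and> x \<in> Domain (th i (f i))" by (auto simp: Th_mem)
        next
          assume "i \<in> I \<and> x \<in> Domain (th i (f i))"
          then obtain y where "i \<in> I" "(x,y) \<in> th i (f i)" by auto
          then have "((i,x),(i,y)) \<in> Th I th f" by (simp add: Th_mem)
          then show "(i,x) \<in> Domain (Th I th f)" by blast
        qed
        show "pq \<in> Th I th (ad ?P f) \<longleftrightarrow> pq \<in> antidom (base (Th I th ` carrier ?P)) (Th I th f)"
          unfolding pq B antidom_def Th_mem adP using ad_i dom
          by (auto simp: antidom_def)
      qed
    qed
    fix g assume g: "g \<in> carrier ?P"
    have gi: "g i \<in> carrier (A i)" if "i \<in> I" for i using g that carP by auto
    show "Th I th (comp ?P f g) = Th I th f O Th I th g"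
    proof (intro set_eqI)
      fix pq :: "('i \<times> 'x) \<times> ('i \<times> 'x)"
      obtain i x j y where pq: "pq = ((i,x),(j,y))" by (metis prod.collapse)
      have c: "th i (comp (A i) (f i) (g i)) = th i (f i) O th i (g i)" if "i \<in> I"
        using rep[OF that] fi[OF that] gi[OF that] unfolding pf_representation_def by blast
      show "pq \<in> Th I th (comp ?P f g) \<longleftrightarrow> pq \<in> Th I th f O Th I th g"
        unfolding pq compP
      proof
        assume "((i, x), j, y) \<in> Th I th (\<lambda>i\<in>I. comp (A i) (f i) (g i))"
        then have "i = j" "i \<in> I" "(x,y) \<in> th i (f i) O th i (g i)" using c by (auto simp: Th_mem)
        then obtain z where "(x,z) \<in> th i (f i)" "(z,y) \<in> th i (g i)" by auto
        then have "((i,x),(i,z)) \<in> Th I th f" "((i,z),(j,y)) \<in> Th I th g"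
          using \<open>i = j\<close> \<open>i \<in> I\<close> by (auto simp: Th_mem)
        then show "((i, x), j, y) \<in> Th I th f O Th I th g" by blast
      next
        assume "((i, x), j, y) \<in> Th I th f O Th I th g"
        then obtain q where q: "((i,x),q) \<in> Th I th f" "(q,(j,y)) \<in> Th I th g" by blast
        then have "i = j" "i \<in> I" "(x, snd q) \<in> th i (f i)" "(snd q, y) \<in> th i (g i)"
          by (auto simp: Th_mem)
        then show "((i, x), j, y) \<in> Th I th (\<lambda>i\<in>I. comp (A i) (f i) (g i))"
          using c by (auto simp: Th_mem)
      qed
    qed
    show "Th I th (mt ?P f g) = Th I th f \<inter> Th I th g"
    proof (intro set_eqI)
      fix pq :: "('i \<times> 'x) \<times> ('i \<times> 'x)"
      obtain i x j y where pq: "pq = ((i,x),(j,y))" by (metis prod.collapse)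
      have c: "th i (mt (A i) (f i) (g i)) = th i (f i) \<inter> th i (g i)" if "i \<in> I"
        using rep[OF that] fi[OF that] gi[OF that] unfolding pf_representation_def by blast
      show "pq \<in> Th I th (mt ?P f g) \<longleftrightarrow> pq \<in> Th I th f \<inter> Th I th g"
        unfolding pq mtP using c by (auto simp: Th_mem)
    qed
  qed
  have meets: "Th I th m = (\<Inter>s\<in>S. Th I th s)"
    if S: "S \<subseteq> carrier ?P" "S \<noteq> {}" and m: "is_meet ?P S m" for S m
  proof -
    have mc: "m \<in> carrier ?P" using m unfolding is_meet_def by auto
    have mi: "is_meet (A i) ((\<lambda>s. s i) ` S) (m i)" if i: "i \<in> I" for i
      unfolding is_meet_def
    proof (intro conjI ballI impI)
      show "m i \<in> carrier (A i)" using mc carP i by auto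
      fix t assume "t \<in> (\<lambda>s. s i) ` S"
      then obtain s where s: "s \<in> S" "t = s i" by auto
      have "mt ?P m s = m" using m s unfolding is_meet_def cwa_le_def by auto
      then have "(\<lambda>i\<in>I. mt (A i) (m i) (s i)) i = m i" unfolding mtP by metis
      then show "cwa_le (A i) (m i) t" using i s unfolding cwa_le_def by simp
    next
      fix c assume c: "c \<in> carrier (A i)" and lb: "\<forall>t\<in>(\<lambda>s. s i) ` S. cwa_le (A i) c t"
      define c' where "c' = m(i := c)"
      have c'c: "c' \<in> carrier ?P" using mc c i carP unfolding c'_def by (auto simp: PiE_iff extensional_def)
      have "\<forall>s\<in>S. cwa_le ?P c' s"
      proof
        fix s assume s: "s \<in> S"
        have ms: "mt ?P m s = m" using m s unfolding is_meet_def cwa_le_def by auto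
        have sc: "s \<in> carrier ?P" using s S by auto
        show "cwa_le ?P c' s" unfolding cwa_le_def mtP
        proof (rule extensionalityI[of _ I])
          show "(\<lambda>i\<in>I. mt (A i) (c' i) (s i)) \<in> extensional I" by simp
          show "c' \<in> extensional I" using c'c carP by (auto simp: PiE_iff)
          fix j assume j: "j \<in> I"
          show "(\<lambda>i\<in>I. mt (A i) (c' i) (s i)) j = c' j"
          proof (cases "j = i")
            case True then show ?thesis using lb s j unfolding c'_def cwa_le_def by auto
          next
            case False
            have "(\<lambda>i\<in>I. mt (A i) (m i) (s i)) j = m j" using ms unfolding mtP by metis
            then show ?thesis using False j unfolding c'_def by simp
          qed
        qed
      qed
      then have "cwa_le ?P c' m" using m c'c unfolding is_meet_def by auto
      then have "(\<lambda>i\<in>I. mt (A i) (c' i) (m i)) i = c' i" unfolding cwa_le_def mtP by metis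
      then show "cwa_le (A i) c (m i)" using i unfolding cwa_le_def c'_def by simp
    qed
    have eqi: "th i (m i) = (\<Inter>s\<in>S. th i (s i))" if i: "i \<in> I" for i
    proof -
      have "(\<lambda>s. s i) ` S \<subseteq> carrier (A i)" using S carP i by auto
      moreover have "(\<lambda>s. s i) ` S \<noteq> {}" using S by auto
      ultimately have "th i (m i) = (\<Inter>t\<in>(\<lambda>s. s i) ` S. th i t)"
        using th[OF i] mi[OF i] unfolding complete_representation_def by blast
      then show ?thesis by simp
    qed
    show ?thesis
    proof (intro set_eqI)
      fix pq :: "('i \<times> 'x) \<times> ('i \<times> 'x)"
      obtain i x j y where pq: "pq = ((i,x),(j,y))" by (metis prod.collapse)
      show "pq \<in> Th I th m \<longleftrightarrow> pq \<in> (\<Inter>s\<in>S. Th I th s)"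
        unfolding pq using eqi S(2) by (auto simp: Th_mem)
    qed
  qed
  have "complete_representation ?P (Th I th)"
    unfolding complete_representation_def using pr meets by blast
  then show "completely_representable ?P TYPE('i \<times> 'x)"
    unfolding completely_representable_def by blast
qed

end
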